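(* Let $r\ge 3$, $\varepsilon>0$, and let $G$ be an $n$-vertex $K_r$-free graph such that for every pair of non-adjacent vertices $u,v\in V(G)$, the induced subgraph $G[N(u)\cap N(v)]$ contains at least $\varepsilon n^{r-2}$ copies of $K_{r-2}$. Then $G=F[\cdot]$ for some maximal $K_r$-free graph $F$ on at most $2^{O((\frac{1}{\varepsilon}+r)\log\frac{1}{\varepsilon})}$ vertices, where the implied constant in the $O(\cdot)$ is absolute.
   Context: $G=F[\cdot]$ means that $G$ is a blow-up of $F$: $G$ is obtained from $F$ by replacing each vertex $x$ of $F$ by an independent set $V_x$ (of some positive size, sizes may differ) and each edge $xy$ of $F$ by a complete bipartite graph between $V_x$ and $V_y$, with no other edges. A graph $F$ is maximal $K_r$-free if it is $K_r$-free and adding any new edge creates a copy of $K_r$. Logarithms are natural. *)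

theory Defs
  imports Complex_Main
begin

definition graph :: "'a set \<Rightarrow> ('a \<Rightarrow> 'a \<Rightarrow> bool) \<Rightarrow> bool" where
  "graph V E \<longleftrightarrow> finite V \<and> (\<forall>u v. E u v \<longrightarrow> u \<in> V \<and> v \<in> V)
     \<and> (\<forall>u v. E u v \<longrightarrow> E v u) \<and> (\<forall>u. \<not> E u u)"

definition clique :: "'a set \<Rightarrow> ('a \<Rightarrow> 'a \<Rightarrow> bool) \<Rightarrow> 'a set \<Rightarrow> bool" where
  "clique V E S \<longleftrightarrow> S \<subseteq> V \<and> (\<forall>x\<in>S. \<forall>y\<in>S. x \<noteq> y \<longrightarrow> E x y)"

definition Kr_free :: "'a set \<Rightarrow> ('a \<Rightarrow> 'a \<Rightarrow> bool) \<Rightarrow> nat \<Rightarrow> bool" where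
  "Kr_free V E r \<longleftrightarrow> \<not> (\<exists>S. clique V E S \<and> finite S \<and> card S = r)"

definition add_edge :: "('a \<Rightarrow> 'a \<Rightarrow> bool) \<Rightarrow> 'a \<Rightarrow> 'a \<Rightarrow> ('a \<Rightarrow> 'a \<Rightarrow> bool)" where
  "add_edge E x y = (\<lambda>a b. E a b \<or> (a = x \<and> b = y) \<or> (a = y \<and> b = x))"

definition maximal_Kr_free :: "'a set \<Rightarrow> ('a \<Rightarrow> 'a \<Rightarrow> bool) \<Rightarrow> nat \<Rightarrow> bool" where
  "maximal_Kr_free V E r \<longleftrightarrow> graph V E \<and> Kr_free V E r \<and>
     (\<forall>x\<in>V. \<forall>y\<in>V. x \<noteq> y \<and> \<not> E x y \<longrightarrow> \<not> Kr_free V (add_edge E x y) r)"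

definition nbhd :: "('a \<Rightarrow> 'a \<Rightarrow> bool) \<Rightarrow> 'a \<Rightarrow> 'a set" where
  "nbhd E u = {v. E u v}"

definition num_cliques :: "'a set \<Rightarrow> ('a \<Rightarrow> 'a \<Rightarrow> bool) \<Rightarrow> 'a set \<Rightarrow> nat \<Rightarrow> nat" where
  "num_cliques V E S k = card {T. T \<subseteq> S \<and> clique V E T \<and> finite T \<and> card T = k}"

text \<open>G = (V,E) is a blow-up F[.] of F = (W,EF): there is a surjection
  phi from V onto W (classes V_x = phi^{-1}(x), nonempty) such that u,v are
  adjacent in G iff phi u, phi v are adjacent in F.\<close>
definition blowup_of :: "'a set \<Rightarrow> ('a \<Rightarrow> 'a \<Rightarrow> bool) \<Rightarrow> 'b set \<Rightarrow> ('b \<Rightarrow> 'b \<Rightarrow> bool) \<Rightarrow> bool" where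
  "blowup_of V E W EF \<longleftrightarrow> (\<exists>\<phi>. \<phi> ` V = W \<and> (\<forall>u\<in>V. \<forall>v\<in>V. E u v \<longleftrightarrow> EF (\<phi> u) (\<phi> v)))"

end

theory Submission imports Defs "HOL-Library.FuncSet" begin

lemma graph_sym: "graph V E \<Longrightarrow> E u v \<Longrightarrow> E v u"
  unfolding graph_def by blast
lemma graph_irrefl: "graph V E \<Longrightarrow> \<not> E u u"
  unfolding graph_def by blast
lemma graph_V1: "graph V E \<Longrightarrow> E u v \<Longrightarrow> u \<in> V"
  unfolding graph_def by blast
lemma graph_V2: "graph V E \<Longrightarrow> E u v \<Longrightarrow> v \<in> V"
  unfolding graph_def by blast
lemma graph_fin: "graph V E \<Longrightarrow> finite V"
  unfolding graph_def by blast
lemma nbhd_iff[simp]: "x \<in> nbhd E u \<longleftrightarrow> E u x"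
  unfolding nbhd_def by simp
lemma nbhd_sub: "graph V E \<Longrightarrow> nbhd E u \<subseteq> V"
  using graph_V2 by fastforce

lemma clique_ext:
  assumes g: "graph V E" and ab: "E a b" and Q: "Q \<subseteq> nbhd E a \<inter> nbhd E b"
    and cq: "clique V E Q" and fQ: "finite Q" and cQ: "card Q = r - 2" and r: "r \<ge> 2"
  shows "clique V E (insert a (insert b Q)) \<and> finite (insert a (insert b Q))
     \<and> card (insert a (insert b Q)) = r"
proof -
  have aQ: "a \<notin> Q" using Q graph_irrefl[OF g] by auto
  have bQ: "b \<notin> Q" using Q graph_irrefl[OF g] by auto
  have abne: "a \<noteq> b" using ab graph_irrefl[OF g] by auto
  have "clique V E (insert a (insert b Q))"
    unfolding clique_def
  proof (intro conjI ballI impI)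
    show "insert a (insert b Q) \<subseteq> V" using cq ab graph_V1[OF g] graph_V2[OF g]
      unfolding clique_def by auto
  next
    fix x y assume "x \<in> insert a (insert b Q)" "y \<in> insert a (insert b Q)" "x \<noteq> y"
    then show "E x y" using Q cq ab graph_sym[OF g] unfolding clique_def by auto
  qed
  moreover have "card (insert a (insert b Q)) = r" using aQ bQ abne fQ cQ r by auto
  ultimately show ?thesis using fQ by auto
qed

lemma clique_ext_False:
  assumes g: "graph V E" and kf: "Kr_free V E r" and ab: "E a b" and Q: "Q \<subseteq> nbhd E a \<inter> nbhd E b"
    and cq: "clique V E Q" and fQ: "finite Q" and cQ: "card Q = r - 2" and r: "r \<ge> 2"
  shows False
  using clique_ext[OF g ab Q cq fQ cQ r] kf unfolding Kr_free_def by blast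

lemma choose_le_pow: "(n::nat) choose k \<le> n ^ k"
  by (cases "k \<le> n") (auto simp: binomial_le_pow binomial_eq_0)

lemma card_ksubsets_le: "finite V \<Longrightarrow> card {Q. Q \<subseteq> V \<and> card Q = k} \<le> card V ^ k"
  using n_subsets choose_le_pow by metis

lemma num_cliques_pos:
  assumes g: "graph V E" and n: "real (num_cliques V E S k) > 0"
  shows "\<exists>Q. Q \<subseteq> S \<and> clique V E Q \<and> finite Q \<and> card Q = k"
proof -
  have "num_cliques V E S k \<noteq> 0" using n by auto
  then have "{T. T \<subseteq> S \<and> clique V E T \<and> finite T \<and> card T = k} \<noteq> {}"
    unfolding num_cliques_def by (metis card.empty)
  then show ?thesis by blast
qed


definition cond where
 "cond V E r \<epsilon> \<longleftrightarrow> (\<forall>u\<in>V. \<forall>v\<in>V. u \<noteq> v \<and> \<not> E u v \<longrightarrow>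
         real (num_cliques V E (nbhd E u \<inter> nbhd E v) (r - 2)) \<ge> \<epsilon> * real (card V) ^ (r - 2))"

lemma card_contain_le:
  assumes fV: "finite V" and r: "r \<ge> 3"
  shows "card {Q. Q \<subseteq> V \<and> d \<in> Q \<and> card Q = r - 2} \<le> card V ^ (r - 3)"
proof -
  have "inj_on (\<lambda>Q. Q - {d}) {Q. Q \<subseteq> V \<and> d \<in> Q \<and> card Q = r - 2}"
    by (intro inj_onI) blast
  moreover have "(\<lambda>Q. Q - {d}) ` {Q. Q \<subseteq> V \<and> d \<in> Q \<and> card Q = r - 2} \<subseteq> {Q. Q \<subseteq> V \<and> card Q = r - 3}"
  proof
    fix X assume "X \<in> (\<lambda>Q. Q - {d}) ` {Q. Q \<subseteq> V \<and> d \<in> Q \<and> card Q = r - 2}"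
    then obtain Q where Q: "Q \<subseteq> V" "d \<in> Q" "card Q = r - 2" "X = Q - {d}" by blast
    have "finite Q" using Q(1) fV finite_subset by blast
    then have "card X = r - 3" using Q r by (simp add: card_Diff_singleton)
    then show "X \<in> {Q. Q \<subseteq> V \<and> card Q = r - 3}" using Q by auto
  qed
  moreover have "finite {Q. Q \<subseteq> V \<and> card Q = r - 3}" using fV by auto
  ultimately have "card {Q. Q \<subseteq> V \<and> d \<in> Q \<and> card Q = r - 2} \<le> card {Q. Q \<subseteq> V \<and> card Q = r - 3}"
    using card_inj_on_le by blast
  also have "\<dots> \<le> card V ^ (r - 3)" using card_ksubsets_le fV by blast
  finally show ?thesis .
qed

lemma sepA:
  assumes g: "graph V E" and kf: "Kr_free V E r" and r: "r \<ge> 3" and c: "cond V E r \<epsilon>"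
    and e: "\<epsilon> > 0"
    and u: "u \<in> V" and v: "v \<in> V" and w: "w \<in> nbhd E u - nbhd E v" and wv: "w \<noteq> v"
  shows "\<epsilon> * card V \<le> card (nbhd E v - nbhd E u)"
proof -
  define n where "n = card V"
  have fV: "finite V" using g graph_fin by auto
  have n0: "n > 0" using v fV n_def card_gt_0_iff by blast
  have uw: "E u w" using w by auto
  have wV: "w \<in> V" using uw graph_V2[OF g] by auto
  have vw: "\<not> E v w" using w by auto
  define QQ where "QQ = {T. T \<subseteq> nbhd E v \<inter> nbhd E w \<and> clique V E T \<and> finite T \<and> card T = r - 2}"
  have big: "real (card QQ) \<ge> \<epsilon> * real n ^ (r - 2)"
    using c v wV wv vw unfolding cond_def QQ_def num_cliques_def n_def by auto
  define D where "D = nbhd E v - nbhd E u"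
  have fD: "finite D" using nbhd_sub[OF g] fV D_def finite_subset by blast
  have sub: "QQ \<subseteq> (\<Union>d\<in>D. {Q. Q \<subseteq> V \<and> d \<in> Q \<and> card Q = r - 2})"
  proof
    fix Q assume Q: "Q \<in> QQ"
    have "Q \<inter> D \<noteq> {}"
    proof
      assume "Q \<inter> D = {}"
      then have "Q \<subseteq> nbhd E u \<inter> nbhd E w" using Q unfolding QQ_def D_def by auto
      then show False using clique_ext_False[OF g kf uw] Q r unfolding QQ_def by auto
    qed
    then show "Q \<in> (\<Union>d\<in>D. {Q. Q \<subseteq> V \<and> d \<in> Q \<and> card Q = r - 2})"
      using Q unfolding QQ_def clique_def by auto
  qed
  have "card QQ \<le> card (\<Union>d\<in>D. {Q. Q \<subseteq> V \<and> d \<in> Q \<and> card Q = r - 2})"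
    by (rule card_mono) (use fD fV sub in auto)
  also have "\<dots> \<le> (\<Sum>d\<in>D. card {Q. Q \<subseteq> V \<and> d \<in> Q \<and> card Q = r - 2})"
    using card_UN_le fD by blast
  also have "\<dots> \<le> (\<Sum>d\<in>D. n ^ (r - 3))"
    by (rule sum_mono) (use card_contain_le[OF fV r] n_def in auto)
  also have "\<dots> = card D * n ^ (r - 3)" by simp
  finally have "real (card QQ) \<le> real (card D) * real n ^ (r - 3)"
    by (metis of_nat_le_iff of_nat_mult of_nat_power)
  with big have "\<epsilon> * real n ^ (r - 2) \<le> real (card D) * real n ^ (r - 3)" by linarith
  moreover have "real n ^ (r - 2) = real n * real n ^ (r - 3)"
    using r by (metis Suc_diff_le diff_Suc_Suc numeral_2_eq_2 numeral_3_eq_3 power_Suc)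
  ultimately have "(\<epsilon> * real n) * real n ^ (r - 3) \<le> real (card D) * real n ^ (r - 3)"
    by (simp add: algebra_simps)
  moreover have "real n ^ (r - 3) > 0" using n0 by simp
  ultimately have "\<epsilon> * real n \<le> real (card D)" by simp
  then show ?thesis unfolding n_def D_def .
qed


lemma sep:
  assumes g: "graph V E" and kf: "Kr_free V E r" and r: "r \<ge> 3" and c: "cond V E r \<epsilon>"
    and e: "\<epsilon> > 0"
    and u: "u \<in> V" and v: "v \<in> V" and nu: "\<exists>z\<in>V. z \<noteq> u \<and> \<not> E u z"
    and ne: "nbhd E u \<noteq> nbhd E v"
  shows "\<epsilon> * card V \<le> card ((nbhd E u - nbhd E v) \<union> (nbhd E v - nbhd E u))"
proof -
  have fV: "finite V" using g graph_fin by auto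
  have fU: "finite ((nbhd E u - nbhd E v) \<union> (nbhd E v - nbhd E u))"
    using nbhd_sub[OF g] fV finite_subset by blast
  show ?thesis
  proof (cases "\<exists>w \<in> nbhd E u - nbhd E v. w \<noteq> v")
    case True
    then obtain w where "w \<in> nbhd E u - nbhd E v" "w \<noteq> v" by blast
    then have "\<epsilon> * card V \<le> card (nbhd E v - nbhd E u)" using sepA[OF g kf r c e u v] by blast
    also have "\<dots> \<le> card ((nbhd E u - nbhd E v) \<union> (nbhd E v - nbhd E u))"
      using card_mono[OF fU] by auto
    finally show ?thesis .
  next
    case F1: False
    show ?thesis
    proof (cases "\<exists>w \<in> nbhd E v - nbhd E u. w \<noteq> u")
      case True
      then obtain w where "w \<in> nbhd E v - nbhd E u" "w \<noteq> u" by blast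
      then have "\<epsilon> * card V \<le> card (nbhd E u - nbhd E v)" using sepA[OF g kf r c e v u] by blast
      also have "\<dots> \<le> card ((nbhd E u - nbhd E v) \<union> (nbhd E v - nbhd E u))"
        using card_mono[OF fU] by auto
      finally show ?thesis .
    next
      case F2: False
      have uv: "E u v"
      proof -
        obtain x where "x \<in> nbhd E u - nbhd E v \<or> x \<in> nbhd E v - nbhd E u" using ne by blast
        then show ?thesis
        proof
          assume "x \<in> nbhd E u - nbhd E v"
          then have "x = v" using F1 by blast
          then show ?thesis using \<open>x \<in> nbhd E u - nbhd E v\<close> by simp
        next
          assume "x \<in> nbhd E v - nbhd E u"
          then have "x = u" using F2 by blast
          then show ?thesis using \<open>x \<in> nbhd E v - nbhd E u\<close> graph_sym[OF g] by simp
        qed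
      qed
      have False
      proof -
        obtain z where z: "z \<in> V" "z \<noteq> u" "\<not> E u z" using nu by blast
        have zv: "z \<noteq> v" using uv z by auto
        have nzv: "\<not> E v z" using F2 z by auto
        have n0: "card V > 0" using u fV card_gt_0_iff by blast
        have "real (num_cliques V E (nbhd E u \<inter> nbhd E z) (r - 2)) \<ge> \<epsilon> * real (card V) ^ (r - 2)"
          using c u z unfolding cond_def by auto
        moreover have "\<epsilon> * real (card V) ^ (r - 2) > 0" using e n0 by simp
        ultimately obtain Q where Q: "Q \<subseteq> nbhd E u \<inter> nbhd E z" "clique V E Q" "finite Q" "card Q = r - 2"
          using num_cliques_pos[OF g] by (meson less_le_trans)
        have "v \<notin> Q" using Q(1) nzv graph_sym[OF g] by auto
        then have "Q \<subseteq> nbhd E u \<inter> nbhd E v" using Q(1) F1 by auto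
        then show False using clique_ext_False[OF g kf uv] Q r by auto
      qed
      then show ?thesis ..
    qed
  qed
qed


definition shatters :: "'a set set \<Rightarrow> 'a set \<Rightarrow> bool" where
  "shatters F T \<longleftrightarrow> (\<forall>T'\<subseteq>T. \<exists>A\<in>F. A \<inter> T = T')"

lemma ladder:
  assumes g: "graph V E" and kf: "Kr_free V E r" and r: "r \<ge> 3" and c: "cond V E r \<epsilon>"
    and e: "\<epsilon> > 0" and V': "V' \<subseteq> V" and T: "T \<subseteq> (V::nat set)"
    and sh: "shatters (nbhd E ` V') T"
  shows "real (card T) * \<epsilon> \<le> 1 + \<epsilon>"
proof (cases "T = {}")
  case True then show ?thesis using e by simp
next
  case False
  have fV: "finite V" using g graph_fin by auto
  have fT: "finite T" using T fV finite_subset by blast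
  define n where "n = card V"
  have "V \<noteq> {}" using False T by blast
  then have n0: "n > 0" using fV by (simp add: n_def card_gt_0_iff)
  have "\<forall>t\<in>T. \<exists>b\<in>V'. nbhd E b \<inter> T = {t'\<in>T. t' < t}"
  proof
    fix t assume "t \<in> T"
    have "{t'\<in>T. t' < t} \<subseteq> T" by auto
    then have "\<exists>A\<in>nbhd E ` V'. A \<inter> T = {t'\<in>T. t' < t}" using sh unfolding shatters_def by simp
    then show "\<exists>b\<in>V'. nbhd E b \<inter> T = {t'\<in>T. t' < t}" by (simp add: image_iff)
  qed
  then obtain b where b0: "\<forall>t\<in>T. b t \<in> V' \<and> nbhd E (b t) \<inter> T = {t'\<in>T. t' < t}"
    using bchoice[of T "\<lambda>t b. b \<in> V' \<and> nbhd E b \<inter> T = {t'\<in>T. t' < t}"] by blast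
  then have b: "\<And>t. t \<in> T \<Longrightarrow> b t \<in> V' \<and> nbhd E (b t) \<inter> T = {t'\<in>T. t' < t}" by blast
  have bE: "E (b t) t' \<longleftrightarrow> t' < t" if "t \<in> T" "t' \<in> T" for t t'
  proof -
    have "t' \<in> nbhd E (b t) \<inter> T \<longleftrightarrow> t' < t" using b[OF that(1)] that(2) by auto
    then show ?thesis using that(2) by simp
  qed
  define I where "I = {t\<in>T. b t \<noteq> t}"
  have fI: "finite I" using fT I_def by auto
  have "card (T - I) \<le> Suc 0"
  proof -
    have "\<forall>a1\<in>T - I. \<forall>a2\<in>T - I. a1 = a2"
    proof (intro ballI)
      fix a1 a2 assume a1: "a1 \<in> T - I" and a2: "a2 \<in> T - I"
      have h: False if "x \<in> T - I" "y \<in> T - I" "x < y" for x y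
      proof -
        have "b x = x" "b y = y" using that I_def by auto
        have "E (b y) x" using bE that by auto
        then have "E y x" using \<open>b y = y\<close> by simp
        then have "E x y" using graph_sym[OF g] by blast
        then have "E (b x) y" using \<open>b x = x\<close> by simp
        then show False using bE that by auto
      qed
      show "a1 = a2"
      proof (rule ccontr)
        assume "a1 \<noteq> a2"
        then have "a1 < a2 \<or> a2 < a1" by arith
        then show False using h[OF a1 a2] h[OF a2 a1] by blast
      qed
    qed
    moreover have "finite (T - I)" using fT by simp
    ultimately show ?thesis using card_le_Suc0_iff_eq by blast
  qed
  moreover have "card T = card I + card (T - I)"
  proof -
    have "I \<subseteq> T" using I_def by auto
    then have "card (T - I) = card T - card I" "card I \<le> card T"
      using fI fT by (auto simp: card_Diff_subset card_mono)
    then show ?thesis by simp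
  qed
  ultimately have cTI: "card T \<le> card I + 1" by simp
  define QQ where "QQ t = {Q. Q \<subseteq> nbhd E (b t) \<inter> nbhd E t \<and> clique V E Q \<and> finite Q \<and> card Q = r - 2}" for t
  have QQbig: "real (card (QQ t)) \<ge> \<epsilon> * real n ^ (r - 2)" if "t \<in> I" for t
  proof -
    have "t \<in> T" "b t \<noteq> t" using that I_def by auto
    moreover have "\<not> E (b t) t" using bE \<open>t \<in> T\<close> by auto
    moreover have "b t \<in> V" using b \<open>t \<in> T\<close> V' by auto
    moreover have "t \<in> V" using \<open>t \<in> T\<close> T by auto
    ultimately show ?thesis using c unfolding cond_def QQ_def num_cliques_def n_def by auto
  qed
  have disj0: "QQ t1 \<inter> QQ t2 = {}" if "t1 \<in> I" "t2 \<in> I" "t1 < t2" for t1 t2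
  proof (rule ccontr)
    assume "QQ t1 \<inter> QQ t2 \<noteq> {}"
    then obtain Q where Q1: "Q \<in> QQ t1" and Q2: "Q \<in> QQ t2" by blast
    have e1: "E (b t2) t1" using bE that I_def by auto
    have qs: "Q \<subseteq> nbhd E (b t2) \<inter> nbhd E t1" using Q1 Q2 QQ_def by auto
    have q3: "clique V E Q" "finite Q" "card Q = r - 2" using Q1 QQ_def by auto
    show False by (rule clique_ext_False[OF g kf e1 qs q3]) (use r in auto)
  qed
  have disj: "QQ t1 \<inter> QQ t2 = {}" if "t1 \<in> I" "t2 \<in> I" "t1 \<noteq> t2" for t1 t2
  proof -
    have "t1 < t2 \<or> t2 < t1" using that(3) by arith
    then show ?thesis using disj0[OF that(1,2)] disj0[OF that(2,1)] by blast
  qed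
  have fQQ: "finite (QQ t)" for t
  proof -
    have "QQ t \<subseteq> Pow V" unfolding QQ_def clique_def by auto
    then show ?thesis using fV finite_subset by blast
  qed
  have "card (\<Union>t\<in>I. QQ t) = (\<Sum>t\<in>I. card (QQ t))"
    by (rule card_UN_disjoint) (use fI fQQ disj in auto)
  moreover have "card (\<Union>t\<in>I. QQ t) \<le> n ^ (r - 2)"
  proof -
    have "(\<Union>t\<in>I. QQ t) \<subseteq> {Q. Q \<subseteq> V \<and> card Q = r - 2}" unfolding QQ_def clique_def by auto
    then have "card (\<Union>t\<in>I. QQ t) \<le> card {Q. Q \<subseteq> V \<and> card Q = r - 2}"
      using fV by (intro card_mono) auto
    also have "\<dots> \<le> n ^ (r - 2)" using card_ksubsets_le fV n_def by blast
    finally show ?thesis .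
  qed
  ultimately have "real (\<Sum>t\<in>I. card (QQ t)) \<le> real n ^ (r - 2)"
    by (metis of_nat_le_iff of_nat_power)
  moreover have "(\<Sum>t\<in>I. \<epsilon> * real n ^ (r - 2)) \<le> real (\<Sum>t\<in>I. card (QQ t))"
    unfolding of_nat_sum by (rule sum_mono) (use QQbig in auto)
  moreover have "(\<Sum>t\<in>I. \<epsilon> * real n ^ (r - 2)) = real (card I) * \<epsilon> * real n ^ (r - 2)" by simp
  ultimately have "real (card I) * \<epsilon> * real n ^ (r - 2) \<le> 1 * real n ^ (r - 2)" by linarith
  moreover have "real n ^ (r - 2) > 0" using n0 by simp
  ultimately have "real (card I) * \<epsilon> \<le> 1" using mult_le_cancel_right_pos by blast
  moreover have "real (card T) * \<epsilon> \<le> (real (card I) + 1) * \<epsilon>" using cTI e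
    by (intro mult_right_mono) auto
  ultimately show ?thesis by (simp add: algebra_simps)
qed


lemma shatters_mono_family: "shatters F T \<Longrightarrow> (\<And>A. A \<in> F \<Longrightarrow> \<exists>B\<in>G. B \<inter> T = A \<inter> T) \<Longrightarrow> shatters G T"
  unfolding shatters_def by metis

lemma pajor:
  assumes "finite S" "F \<subseteq> Pow S"
  shows "card F \<le> card {T. T \<subseteq> S \<and> shatters F T}"
  using assms
proof (induction S arbitrary: F rule: finite_induct)
  case empty
  show ?case
  proof (cases "F = {}")
    case True then show ?thesis by simp
  next
    case False
    then have "F = {{}}" using empty by auto
    moreover have "shatters {{}} {}" unfolding shatters_def by auto
    ultimately have "{T. T \<subseteq> {} \<and> shatters F T} = {{}}" by auto
    then show ?thesis using \<open>F = {{}}\<close> by simp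
  qed
next
  case (insert x S)
  define F0 where "F0 = {A\<in>F. x \<notin> A}"
  define Fx where "Fx = {A\<in>F. x \<in> A}"
  define F1 where "F1 = (\<lambda>A. A - {x}) ` Fx"
  have fPow: "finite (Pow (insert x S))" using insert.hyps by simp
  have fF: "finite F" using insert.prems fPow finite_subset by blast
  have "F = F0 \<union> Fx" "F0 \<inter> Fx = {}" unfolding F0_def Fx_def by auto
  then have cF: "card F = card F0 + card Fx"
    using fF by (metis card_Un_disjoint finite_Un)
  have "inj_on (\<lambda>A. A - {x}) Fx"
  proof (rule inj_onI)
    fix A B assume "A \<in> Fx" "B \<in> Fx" "A - {x} = B - {x}"
    then show "A = B" unfolding Fx_def by (metis insert_Diff mem_Collect_eq)
  qed
  then have cFx: "card Fx = card F1" unfolding F1_def by (simp add: card_image)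
  have F0S: "F0 \<subseteq> Pow S" using insert.prems unfolding F0_def by auto
  have F1S: "F1 \<subseteq> Pow S" using insert.prems unfolding F1_def Fx_def by auto
  have fF0: "finite F0" using F0S insert.hyps finite_subset by (metis finite_Pow_iff)
  have fF1: "finite F1" using F1S insert.hyps finite_subset by (metis finite_Pow_iff)
  have cUI: "card F0 + card F1 = card (F0 \<union> F1) + card (F0 \<inter> F1)"
    using card_Un_Int[OF fF0 fF1] .
  define SH1 where "SH1 = {T. T \<subseteq> S \<and> shatters (F0 \<union> F1) T}"
  define SH2 where "SH2 = {T. T \<subseteq> S \<and> shatters (F0 \<inter> F1) T}"
  define SHF where "SHF = {T. T \<subseteq> insert x S \<and> shatters F T}"
  have IH1: "card (F0 \<union> F1) \<le> card SH1" using insert.IH F0S F1S SH1_def by auto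
  have IH2: "card (F0 \<inter> F1) \<le> card SH2" unfolding SH2_def by (rule insert.IH) (use F0S in auto)
  have sub1: "SH1 \<subseteq> SHF"
  proof
    fix T assume T: "T \<in> SH1"
    have xT: "x \<notin> T" using T insert.hyps SH1_def by auto
    have "shatters F T"
    proof (rule shatters_mono_family)
      show "shatters (F0 \<union> F1) T" using T SH1_def by auto
    next
      fix A assume "A \<in> F0 \<union> F1"
      then show "\<exists>B\<in>F. B \<inter> T = A \<inter> T"
      proof
        assume "A \<in> F0" then show ?thesis unfolding F0_def by auto
      next
        assume "A \<in> F1"
        then obtain B where "B \<in> Fx" "A = B - {x}" unfolding F1_def by auto
        then show ?thesis using xT unfolding Fx_def by auto
      qed
    qed
    then show "T \<in> SHF" using T SH1_def SHF_def by auto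
  qed
  have sub2: "insert x ` SH2 \<subseteq> SHF"
  proof
    fix T' assume "T' \<in> insert x ` SH2"
    then obtain T where T: "T \<in> SH2" "T' = insert x T" by auto
    have xT: "x \<notin> T" using T insert.hyps SH2_def by auto
    have sh2: "shatters (F0 \<inter> F1) T" using T SH2_def by auto
    have "shatters F (insert x T)"
      unfolding shatters_def
    proof (intro allI impI)
      fix U assume U: "U \<subseteq> insert x T"
      have "U - {x} \<subseteq> T" using U by auto
      then obtain A where A: "A \<in> F0 \<inter> F1" "A \<inter> T = U - {x}" using sh2 unfolding shatters_def by meson
      show "\<exists>B\<in>F. B \<inter> insert x T = U"
      proof (cases "x \<in> U")
        case True
        obtain B where B: "B \<in> Fx" "A = B - {x}" using A(1) unfolding F1_def by auto
        have "B \<inter> insert x T = U"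
        proof -
          have "B \<inter> insert x T = insert x (B \<inter> T)" using B(1) Fx_def by auto
          also have "B \<inter> T = A \<inter> T" using B(2) xT by auto
          finally show ?thesis using A(2) True by auto
        qed
        then show ?thesis using B(1) Fx_def by auto
      next
        case False
        have "A \<in> F" "x \<notin> A" using A(1) F0_def by auto
        then have "A \<inter> insert x T = U" using A(2) False by auto
        then show ?thesis using \<open>A \<in> F\<close> by auto
      qed
    qed
    then show "T' \<in> SHF" using T SH2_def SHF_def by auto
  qed
  have disj: "SH1 \<inter> insert x ` SH2 = {}" using insert.hyps SH1_def by auto
  have inj: "inj_on (insert x) SH2"
  proof (rule inj_onI)
    fix A B assume "A \<in> SH2" "B \<in> SH2" "insert x A = insert x B"
    then show "A = B" using insert.hyps SH2_def by (metis Diff_insert_absorb mem_Collect_eq subsetD)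
  qed
  have fSHF: "finite SHF" using fPow SHF_def finite_subset by (metis (no_types, lifting) Pow_iff mem_Collect_eq subsetI)
  have fSH1: "finite SH1" using sub1 fSHF finite_subset by blast
  have fSH2: "finite (insert x ` SH2)" using sub2 fSHF finite_subset by blast
  have "card F = card (F0 \<union> F1) + card (F0 \<inter> F1)" using cF cFx cUI by simp
  also have "\<dots> \<le> card SH1 + card SH2" using IH1 IH2 by simp
  also have "card SH2 = card (insert x ` SH2)" using inj by (simp add: card_image)
  also have "card SH1 + card (insert x ` SH2) = card (SH1 \<union> insert x ` SH2)"
    using card_Un_disjoint[OF fSH1 fSH2 disj] by simp
  also have "\<dots> \<le> card SHF" using sub1 sub2 fSHF by (intro card_mono) auto
  finally show ?case unfolding SHF_def .
qed

lemma card_small_subsets: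
  assumes "finite S"
  shows "card {T. T \<subseteq> S \<and> card T \<le> K} \<le> (card S + 1) ^ K"
proof (induction K)
  case 0
  have "{T. T \<subseteq> S \<and> card T \<le> 0} = {{}}" using assms by (auto dest: finite_subset)
  then show ?case by simp
next
  case (Suc K)
  define C where "C = {T. T \<subseteq> S \<and> card T \<le> K}"
  have fC: "finite C" using assms C_def by auto
  have "{T. T \<subseteq> S \<and> card T \<le> Suc K} \<subseteq> C \<union> (\<Union>x\<in>S. insert x ` C)"
  proof
    fix T assume T: "T \<in> {T. T \<subseteq> S \<and> card T \<le> Suc K}"
    show "T \<in> C \<union> (\<Union>x\<in>S. insert x ` C)"
    proof (cases "T = {}")
      case True then show ?thesis using C_def by auto
    next
      case False
      then obtain x where x: "x \<in> T" by blast
      have fT: "finite T" using T assms finite_subset by auto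
      have "T - {x} \<in> C" using T x fT C_def by auto
      moreover have "T = insert x (T - {x})" using x by auto
      ultimately show ?thesis using x T by blast
    qed
  qed
  then have "card {T. T \<subseteq> S \<and> card T \<le> Suc K} \<le> card (C \<union> (\<Union>x\<in>S. insert x ` C))"
    using assms fC by (intro card_mono) auto
  also have "\<dots> \<le> card C + card (\<Union>x\<in>S. insert x ` C)" by (rule card_Un_le)
  also have "card (\<Union>x\<in>S. insert x ` C) \<le> (\<Sum>x\<in>S. card (insert x ` C))"
    using assms by (rule card_UN_le)
  also have "(\<Sum>x\<in>S. card (insert x ` C)) \<le> (\<Sum>x\<in>S. card C)"
    by (rule sum_mono) (rule card_image_le[OF fC])
  also have "(\<Sum>x\<in>S. card C) = card S * card C" by simp
  finally have "card {T. T \<subseteq> S \<and> card T \<le> Suc K} \<le> (card S + 1) * card C" by simp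
  also have "\<dots> \<le> (card S + 1) * (card S + 1) ^ K" using Suc C_def by (intro mult_le_mono2) simp
  finally show ?case by simp
qed


lemma pow_half:
  assumes e: "0 < \<epsilon>" "\<epsilon> \<le> 1" and k: "real k * \<epsilon> \<ge> 1"
  shows "(1 - \<epsilon>) ^ k \<le> 1 / 2"
proof -
  have "(1 - \<epsilon>) ^ k \<le> exp (- \<epsilon>) ^ k"
    using e by (intro power_mono) (use exp_ge_add_one_self[of "-\<epsilon>"] in auto)
  also have "\<dots> = exp (- (real k * \<epsilon>))" by (simp add: exp_of_nat_mult[symmetric])
  also have "\<dots> \<le> exp (-1)" using k by simp
  also have "\<dots> = 1 / exp 1" by (simp add: exp_minus field_simps)
  also have "\<dots> \<le> 1 / 2" using exp_ge_add_one_self[of 1] by (intro divide_left_mono) auto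
  finally show ?thesis .
qed

lemma packing:
  fixes V :: "'a set" and N :: "'a set set" and \<epsilon> :: real
  assumes fV: "finite V" and NV: "N \<subseteq> Pow V" and e: "0 < \<epsilon>" "\<epsilon> \<le> 1"
    and sepN: "\<forall>A\<in>N. \<forall>B\<in>N. A \<noteq> B \<longrightarrow> \<epsilon> * real (card V) \<le> real (card ((A - B) \<union> (B - A)))"
    and shK: "\<forall>T. T \<subseteq> V \<and> shatters N T \<longrightarrow> card T \<le> K"
    and k: "real k * \<epsilon> \<ge> 1"
    and big: "(k * (2 * p + 1) + 1) ^ K < (2::nat) ^ p"
  shows "card N < 2 ^ p"
proof (rule ccontr)
  assume "\<not> card N < 2 ^ p"
  then obtain N' where N': "N' \<subseteq> N" "card N' = 2 ^ p" "finite N'"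
    using obtain_subset_with_card_n[of "2^p" N] by auto
  define n where "n = card V"
  define s where "s = k * (2 * p + 1)"
  define P where "P = {q \<in> N' \<times> N'. fst q \<noteq> snd q}"
  define Dl where "Dl q = (fst q - snd q) \<union> (snd q - fst q)" for q :: "'a set \<times> 'a set"
  define Bad where "Bad q = (\<Pi>\<^sub>E i\<in>{..<s}. V - Dl q)" for q
  have fP: "finite P" using N'(3) P_def by auto
  have cP: "card P \<le> 4 ^ p"
  proof -
    have "card P \<le> card (N' \<times> N')" using N'(3) P_def by (intro card_mono) auto
    also have "\<dots> = 4 ^ p" using N'(2) by (simp add: card_cartesian_product power_mult_distrib[symmetric])
    finally show ?thesis .
  qed
  have hpow: "(1 - \<epsilon>) ^ s \<le> (1/2) ^ (2 * p + 1)"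
  proof -
    have "(1 - \<epsilon>) ^ s = ((1 - \<epsilon>) ^ k) ^ (2 * p + 1)" unfolding s_def by (rule power_mult)
    also have "\<dots> \<le> (1/2) ^ (2 * p + 1)"
      using pow_half[OF e k] e by (intro power_mono) auto
    finally show ?thesis .
  qed
  have cBad: "real (card (Bad q)) \<le> (1 - \<epsilon>) ^ s * real n ^ s" if q: "q \<in> P" for q
  proof -
    obtain A B where AB0: "q = (A, B)" using prod.exhaust by blast
    then have AB: "q = (A, B)" "A \<in> N" "B \<in> N" "A \<noteq> B" using q P_def N'(1) by auto
    have DV: "Dl q \<subseteq> V" using AB NV Dl_def by auto
    have fD: "finite (Dl q)" using DV fV finite_subset by blast
    have "\<epsilon> * n \<le> card (Dl q)" using sepN AB Dl_def n_def by auto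
    moreover have "card (V - Dl q) = n - card (Dl q)" using DV fD n_def by (simp add: card_Diff_subset)
    moreover have "card (Dl q) \<le> n" using DV fV n_def card_mono by blast
    ultimately have c1: "real (card (V - Dl q)) \<le> (1 - \<epsilon>) * n" by (simp add: algebra_simps of_nat_diff)
    have "card (Bad q) = card (V - Dl q) ^ s" unfolding Bad_def by (simp add: card_PiE)
    then have "real (card (Bad q)) = real (card (V - Dl q)) ^ s" by simp
    also have "\<dots> \<le> ((1 - \<epsilon>) * n) ^ s" using c1 by (intro power_mono) auto
    finally show ?thesis by (simp add: power_mult_distrib)
  qed
  have "real (card (\<Union>q\<in>P. Bad q)) \<le> real (\<Sum>q\<in>P. card (Bad q))"
    using card_UN_le[OF fP, of Bad] by linarith
  also have "\<dots> = (\<Sum>q\<in>P. real (card (Bad q)))" by simp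
  also have "\<dots> \<le> (\<Sum>q\<in>P. (1 - \<epsilon>) ^ s * real n ^ s)" by (rule sum_mono) (use cBad in auto)
  also have "\<dots> = real (card P) * ((1 - \<epsilon>) ^ s * real n ^ s)" by simp
  also have "\<dots> \<le> 4 ^ p * ((1/2) ^ (2 * p + 1) * real n ^ s)"
  proof (rule mult_mono)
    show "real (card P) \<le> 4 ^ p" using cP by (metis of_nat_le_iff of_nat_numeral of_nat_power)
    show "(1 - \<epsilon>) ^ s * real n ^ s \<le> (1 / 2) ^ (2 * p + 1) * real n ^ s"
      using hpow by (intro mult_right_mono) auto
  qed (use e in auto)
  also have "\<dots> = real n ^ s / 2"
  proof -
    have "(4::real) ^ p * (1/2) ^ (2 * p + 1) = 1 / 2"
      by (simp add: power_add power_mult power_divide)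
    then show ?thesis by (simp add: field_simps)
  qed
  finally have cU: "real (card (\<Union>q\<in>P. Bad q)) \<le> real n ^ s / 2" .
  have p0: "p > 0"
  proof (rule ccontr)
    assume "\<not> p > 0"
    then have "p = 0" by simp
    then show False using big by simp
  qed
  have n0: "n > 0"
  proof -
    have "(2::nat) ^ 1 \<le> 2 ^ p" using p0 by (intro power_increasing) auto
    then have "\<not> card N' \<le> Suc 0" using N'(2) by simp
    then have "\<not> (\<forall>a1\<in>N'. \<forall>a2\<in>N'. a1 = a2)" using card_le_Suc0_iff_eq[OF N'(3)] by simp
    then obtain A B where "A \<in> N'" "B \<in> N'" "A \<noteq> B" by blast
    then have "V \<noteq> {}" using N'(1) NV by auto
    then show ?thesis using fV n_def by (simp add: card_gt_0_iff)
  qed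
  have cPi: "card (\<Pi>\<^sub>E i\<in>{..<s}. V) = n ^ s" by (simp add: card_PiE n_def)
  have "real n ^ s / 2 < real n ^ s" using n0 by simp
  with cU have "real (card (\<Union>q\<in>P. Bad q)) < real (n ^ s)" unfolding of_nat_power by linarith
  then have "card (\<Union>q\<in>P. Bad q) < card (\<Pi>\<^sub>E i\<in>{..<s}. V)" using cPi by (simp only: of_nat_less_iff)
  then have "\<not> (\<Pi>\<^sub>E i\<in>{..<s}. V) \<subseteq> (\<Union>q\<in>P. Bad q)"
  proof (intro notI)
    assume a: "(\<Pi>\<^sub>E i\<in>{..<s}. V) \<subseteq> (\<Union>q\<in>P. Bad q)"
    have "finite (\<Union>q\<in>P. Bad q)" using fP fV unfolding Bad_def by (intro finite_UN_I finite_PiE) auto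
    then have "card (\<Pi>\<^sub>E i\<in>{..<s}. V) \<le> card (\<Union>q\<in>P. Bad q)" using a card_mono by blast
    then show False using \<open>card (\<Union>q\<in>P. Bad q) < card (\<Pi>\<^sub>E i\<in>{..<s}. V)\<close> by simp
  qed
  then obtain f where f: "f \<in> (\<Pi>\<^sub>E i\<in>{..<s}. V)" "f \<notin> (\<Union>q\<in>P. Bad q)" by blast
  define S where "S = f ` {..<s}"
  have SV: "S \<subseteq> V" using f(1) S_def by auto
  have fS: "finite S" using S_def by simp
  have inj: "inj_on (\<lambda>A. A \<inter> S) N'"
  proof (rule inj_onI, rule ccontr)
    fix A B assume A: "A \<in> N'" and B: "B \<in> N'" and eq: "A \<inter> S = B \<inter> S" and ne: "A \<noteq> B"
    have "(A, B) \<in> P" using A B ne P_def by auto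
    then have "f \<notin> Bad (A, B)" using f(2) by blast
    then obtain i where i: "i < s" "f i \<notin> V - Dl (A, B)" using f(1) unfolding Bad_def PiE_def Pi_def by auto
    then have "f i \<in> Dl (A, B)" using f(1) by auto
    moreover have "f i \<in> S" using i S_def by auto
    ultimately show False using eq Dl_def by auto
  qed
  define TR where "TR = (\<lambda>A. A \<inter> S) ` N'"
  have "card N' = card TR" using inj TR_def by (simp add: card_image)
  also have "\<dots> \<le> card {T. T \<subseteq> S \<and> shatters TR T}"
    by (rule pajor[OF fS]) (auto simp: TR_def)
  also have "\<dots> \<le> card {T. T \<subseteq> S \<and> card T \<le> K}"
  proof (rule card_mono)
    show "finite {T. T \<subseteq> S \<and> card T \<le> K}" using fS by simp
    show "{T. T \<subseteq> S \<and> shatters TR T} \<subseteq> {T. T \<subseteq> S \<and> card T \<le> K}"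
    proof
      fix T assume T: "T \<in> {T. T \<subseteq> S \<and> shatters TR T}"
      have "shatters N T"
        unfolding shatters_def
      proof (intro allI impI)
        fix T' assume "T' \<subseteq> T"
        then obtain A where "A \<in> TR" "A \<inter> T = T'" using T unfolding shatters_def by blast
        then obtain B where "B \<in> N'" "A = B \<inter> S" using TR_def by auto
        then show "\<exists>A\<in>N. A \<inter> T = T'" using \<open>A \<inter> T = T'\<close> T N'(1) by blast
      qed
      then show "T \<in> {T. T \<subseteq> S \<and> card T \<le> K}" using shK T SV by auto
    qed
  qed
  also have "\<dots> \<le> (card S + 1) ^ K" by (rule card_small_subsets[OF fS])
  also have "\<dots> \<le> (s + 1) ^ K" using card_image_le[of "{..<s}" f] S_def by (intro power_mono) auto
  finally have "2 ^ p \<le> (s + 1) ^ K" using N'(2) by simp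
  then show False using big s_def by simp
qed

lemma suc_le_pow2: "Suc j \<le> (2::nat) ^ j"
  by (induction j) auto

lemma big_nat:
  assumes k1: "1 \<le> k" and ky: "k \<le> (2::nat) ^ j"
  shows "(k * (2 * (8 * (k + 1) * (j + 1)) + 1) + 1) ^ (k + 1) < (2::nat) ^ (8 * (k + 1) * (j + 1))"
proof -
  define y where "y = (2::nat) ^ j"
  have y1: "1 \<le> y" using y_def by simp
  have jy: "j + 1 \<le> y" using suc_le_pow2 y_def by simp
  have ky': "k \<le> y" using ky y_def by simp
  have "8 * (k + 1) * (j + 1) \<le> 8 * (2 * y) * y"
    using ky' jy y1 by (intro mult_mono) auto
  then have pb: "8 * (k + 1) * (j + 1) \<le> 16 * y * y" by simp
  have "2 * (8 * (k + 1) * (j + 1)) + 1 \<le> 2 * (16 * y * y) + 1" using pb by simp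
  then have "k * (2 * (8 * (k + 1) * (j + 1)) + 1) \<le> y * (2 * (16 * y * y) + 1)"
    using ky' by (rule mult_le_mono[rotated])
  then have "k * (2 * (8 * (k + 1) * (j + 1)) + 1) + 1 \<le> y * (2 * (16 * y * y) + 1) + 1" by simp
  also have "\<dots> \<le> 34 * (y * y * y)"
  proof -
    have "y * 1 * 1 \<le> y * y * y" using y1 by (intro mult_le_mono) auto
    then have "y \<le> y * y * y" by simp
    have "1 \<le> y * y * y" using y1 \<open>y \<le> y * y * y\<close> by linarith
    have "y * (2 * (16 * y * y) + 1) + 1 = 32 * (y * y * y) + y + 1" by (simp add: algebra_simps)
    then show ?thesis using \<open>y \<le> y * y * y\<close> \<open>1 \<le> y * y * y\<close> by linarith
  qed
  also have "\<dots> < 256 * (y * y * y * y * y * y * y * y)"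
  proof -
    have "y * y * y * 1 * 1 * 1 * 1 * 1 \<le> y * y * y * y * y * y * y * y"
      using y1 by (intro mult_le_mono) auto
    then have "y * y * y \<le> y * y * y * y * y * y * y * y" by simp
    moreover have "1 * 1 * 1 \<le> y * y * y" using y1 by (intro mult_le_mono) auto
    ultimately show ?thesis by linarith
  qed
  also have "\<dots> = 2 ^ (8 * (j + 1))"
    by (simp add: y_def power_mult[symmetric] power_add algebra_simps eval_nat_numeral)
  finally have b: "k * (2 * (8 * (k + 1) * (j + 1)) + 1) + 1 < 2 ^ (8 * (j + 1))" .
  have "(k * (2 * (8 * (k + 1) * (j + 1)) + 1) + 1) ^ (k + 1) < (2 ^ (8 * (j + 1))) ^ (k + 1)"
    using b by (intro power_strict_mono) auto
  also have "\<dots> = 2 ^ (8 * (j + 1) * (k + 1))" by (rule power_mult[symmetric])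
  also have "8 * (j + 1) * (k + 1) = 8 * (k + 1) * (j + 1)" by (simp add: algebra_simps)
  finally show ?thesis .
qed

lemma ln2_gt_half: "ln (2::real) > 1/2"
proof -
  have "exp (1/2::real) ^ 2 = exp 1" by (simp add: exp_of_nat_mult[symmetric])
  also have "\<dots> \<le> 3" by (rule exp_le)
  finally have "exp (1/2::real) ^ 2 < 2 ^ 2" by simp
  then have "exp (1/2::real) < 2" by (rule power_less_imp_less_base) simp
  then have "ln (exp (1/2::real)) < ln 2" by (intro ln_less_cancel_iff[THEN iffD2]) auto
  then show ?thesis by simp
qed

lemma numeric:
  fixes \<epsilon> :: real
  assumes e: "0 < \<epsilon>" "\<epsilon> \<le> 1/2"
  shows "\<exists>k p. real k * \<epsilon> \<ge> 1 \<and> 1 / \<epsilon> \<le> real k \<and>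
     (k * (2 * p + 1) + 1) ^ (k + 1) < (2::nat) ^ p \<and>
     (\<forall>r::nat. real r + real p \<le> 128 * (1/\<epsilon> + real r) * ln (1/\<epsilon>))"
proof -
  define x where "x = 1 / \<epsilon>"
  have x2: "x \<ge> 2" using e unfolding x_def by (simp add: le_divide_eq)
  define k where "k = nat \<lceil>x\<rceil>"
  have kx: "x \<le> real k" "real k < x + 1" using x2 k_def by linarith+
  have k1: "k \<ge> 1" using kx x2 by linarith
  have ke: "real k * \<epsilon> \<ge> 1" using kx(1) e x_def by (simp add: field_simps)
  define j where "j = (LEAST j. k \<le> (2::nat) ^ j)"
  have ex: "\<exists>j. k \<le> (2::nat) ^ j" using less_exp[of k] by (metis less_imp_le)
  have kj: "k \<le> 2 ^ j" using LeastI_ex[OF ex] j_def by simp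
  have j2: "2 ^ j < 2 * k"
  proof (cases j)
    case 0 then show ?thesis using k1 by simp
  next
    case (Suc i)
    then have "\<not> k \<le> 2 ^ i" using not_less_Least[of i "\<lambda>j. k \<le> (2::nat) ^ j"] j_def by auto
    then show ?thesis using Suc by simp
  qed
  define p where "p = 8 * (k + 1) * (j + 1)"
  have big: "(k * (2 * p + 1) + 1) ^ (k + 1) < (2::nat) ^ p"
    unfolding p_def by (rule big_nat[OF k1 kj])
  have lnx: "ln x \<ge> ln 2" using x2 by simp
  have ln2: "ln (2::real) > 1/2" by (rule ln2_gt_half)
  have "(2::nat) ^ (j + 1) < 4 * k" using j2 by simp
  then have "real ((2::nat) ^ (j + 1)) < real (4 * k)" by (simp only: of_nat_less_iff)
  then have "real ((2::nat) ^ (j + 1)) < 2 * (2 * real k)" by simp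
  also have "\<dots> \<le> x ^ 4"
  proof -
    have "2 * (2 * real k) \<le> 4 * (x + 1)" using kx by simp
    also have "\<dots> \<le> 6 * x" using x2 by simp
    also have "\<dots> \<le> x ^ 4"
    proof -
      have "x ^ 3 \<ge> 2 ^ 3" using x2 by (intro power_mono) auto
      then have "6 \<le> x ^ 3" by simp
      then have "6 * x \<le> x ^ 3 * x" using x2 by (intro mult_right_mono) auto
      then show ?thesis by (simp add: power_Suc2[symmetric] eval_nat_numeral)
    qed
    finally show ?thesis .
  qed
  finally have "(2::real) ^ (j + 1) < x ^ 4" by simp
  then have "ln ((2::real) ^ (j + 1)) < ln (x ^ 4)" using x2 by (intro ln_less_cancel_iff[THEN iffD2]) auto
  moreover have "ln ((2::real) ^ (j + 1)) = real (j + 1) * ln 2" by (rule ln_realpow)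
  moreover have "ln (x ^ 4) = real 4 * ln x" using x2 by (intro ln_realpow)
  ultimately have "real (j + 1) * ln 2 < 4 * ln x" by simp
  moreover have "real (j + 1) * (1/2) \<le> real (j + 1) * ln 2" using ln2 by (intro mult_left_mono) auto
  ultimately have "real (j + 1) * (1/2) < 4 * ln x" by linarith
  then have jb: "real (j + 1) \<le> 8 * ln x" by simp
  have kb: "real (k + 1) \<le> 2 * x" using kx x2 by simp
  have "real p = 8 * real (k + 1) * real (j + 1)" by (simp add: p_def algebra_simps)
  also have "\<dots> \<le> 8 * (2 * x) * (8 * ln x)"
    using kb jb x2 by (intro mult_mono) auto
  finally have pb: "real p \<le> 128 * x * ln x" by simp
  have rb: "\<forall>r::nat. real r + real p \<le> 128 * (x + real r) * ln x"
  proof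
    fix r :: nat
    have "real r \<le> 128 * real r * ln x" using lnx ln2
    proof -
      have "1 \<le> 128 * ln x" using lnx ln2 by linarith
      then have "real r * 1 \<le> real r * (128 * ln x)" by (intro mult_left_mono) auto
      then show ?thesis by simp
    qed
    then show "real r + real p \<le> 128 * (x + real r) * ln x" using pb by (simp add: algebra_simps)
  qed
  show ?thesis using ke kx big rb x_def by blast
qed


lemma add_le_mult_nat: "2 \<le> (a::nat) \<Longrightarrow> 2 \<le> b \<Longrightarrow> a + b \<le> a * b"
proof -
  assume a: "2 \<le> a" and b: "2 \<le> b"
  have h1: "2 * b \<le> a * b" using a by (rule mult_le_mono1)
  have h2: "a * 2 \<le> a * b" using b by (rule mult_le_mono2)
  from h1 h2 show ?thesis by linarith
qed

lemma card_univ_le: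
  assumes g: "graph V E" and kf: "Kr_free V E r" and r: "r \<ge> 1"
  shows "card {u\<in>V. \<forall>z\<in>V. z \<noteq> u \<longrightarrow> E u z} \<le> r - 1"
proof (rule ccontr)
  define U where "U = {u\<in>V. \<forall>z\<in>V. z \<noteq> u \<longrightarrow> E u z}"
  assume "\<not> card {u\<in>V. \<forall>z\<in>V. z \<noteq> u \<longrightarrow> E u z} \<le> r - 1"
  then have "r \<le> card U" using U_def r by simp
  then obtain S where S: "S \<subseteq> U" "card S = r" "finite S" using obtain_subset_with_card_n by metis
  have "clique V E S" unfolding clique_def
  proof (intro conjI ballI impI)
    show "S \<subseteq> V" using S(1) U_def by auto
    fix x y assume "x \<in> S" "y \<in> S" "x \<noteq> y"
    then have "x \<in> U" "y \<in> V" using S(1) U_def by auto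
    then show "E x y" using \<open>x \<noteq> y\<close> U_def by auto
  qed
  then show False using kf S unfolding Kr_free_def by blast
qed

lemma main_bound:
  fixes V :: "nat set" and \<epsilon> :: real
  assumes g: "graph V E" and kf: "Kr_free V E r" and r: "r \<ge> 3" and c: "cond V E r \<epsilon>"
    and e: "0 < \<epsilon>" "\<epsilon> \<le> 1/2"
  shows "real (card (nbhd E ` V)) \<le> 2 powr (128 * (1/\<epsilon> + real r) * ln (1/\<epsilon>))"
proof -
  obtain k p where kp: "real k * \<epsilon> \<ge> 1" "1 / \<epsilon> \<le> real k"
     "(k * (2 * p + 1) + 1) ^ (k + 1) < (2::nat) ^ p"
     "\<forall>r::nat. real r + real p \<le> 128 * (1/\<epsilon> + real r) * ln (1/\<epsilon>)"
    using numeric[OF e] by blast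
  have fV: "finite V" using g graph_fin by auto
  define U where "U = {u\<in>V. \<forall>z\<in>V. z \<noteq> u \<longrightarrow> E u z}"
  define V' where "V' = {u\<in>V. \<exists>z\<in>V. z \<noteq> u \<and> \<not> E u z}"
  have VU: "V = U \<union> V'" unfolding U_def V'_def by auto
  have cU: "card U \<le> r - 1" using card_univ_le[OF g kf] r U_def by simp
  have V'V: "V' \<subseteq> V" using V'_def by auto
  have cV': "card (nbhd E ` V') < 2 ^ p"
  proof (rule packing[OF fV _ e(1) _ _ _ kp(1) kp(3)])
    show "nbhd E ` V' \<subseteq> Pow V" using nbhd_sub[OF g] by auto
    show "\<epsilon> \<le> 1" using e by simp
    show "\<forall>A\<in>nbhd E ` V'. \<forall>B\<in>nbhd E ` V'. A \<noteq> B \<longrightarrow>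
        \<epsilon> * real (card V) \<le> real (card (A - B \<union> (B - A)))"
    proof (intro ballI impI)
      fix A B assume A: "A \<in> nbhd E ` V'" and B: "B \<in> nbhd E ` V'" and ne: "A \<noteq> B"
      obtain u where u: "u \<in> V'" "A = nbhd E u" using A by auto
      obtain v where v: "v \<in> V'" "B = nbhd E v" using B by auto
      have "u \<in> V" "v \<in> V" "\<exists>z\<in>V. z \<noteq> u \<and> \<not> E u z" using u v V'_def by auto
      then show "\<epsilon> * real (card V) \<le> real (card (A - B \<union> (B - A)))"
        using sep[OF g kf r c e(1)] u v ne by blast
    qed
    show "\<forall>T. T \<subseteq> V \<and> shatters (nbhd E ` V') T \<longrightarrow> card T \<le> k + 1"
    proof (intro allI impI)
      fix T assume T: "T \<subseteq> V \<and> shatters (nbhd E ` V') T"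
      have "real (card T) * \<epsilon> \<le> 1 + \<epsilon>" using ladder[OF g kf r c e(1) V'V] T by blast
      then have "real (card T) \<le> (1 + \<epsilon>) / \<epsilon>" using e by (simp add: field_simps)
      also have "\<dots> = 1 / \<epsilon> + 1" using e by (simp add: field_simps)
      also have "\<dots> \<le> real k + 1" using kp(2) by simp
      finally have "real (card T) \<le> real (k + 1)" by simp
      then show "card T \<le> k + 1" by (simp only: of_nat_le_iff)
    qed
  qed
  have "card (nbhd E ` V) \<le> card (nbhd E ` U) + card (nbhd E ` V')"
    unfolding VU image_Un by (rule card_Un_le)
  also have "card (nbhd E ` U) \<le> card U" using fV U_def by (intro card_image_le) auto
  finally have "card (nbhd E ` V) \<le> r + 2 ^ p" using cU cV' by linarith
  also have "\<dots> \<le> 2 ^ r + 2 ^ p" using less_exp[of r] by simp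
  also have "\<dots> \<le> 2 ^ r * 2 ^ p"
  proof (rule add_le_mult_nat)
    have "(2::nat) ^ 1 \<le> 2 ^ r" using r by (intro power_increasing) auto
    then show "2 \<le> (2::nat) ^ r" by simp
    have "p \<noteq> 0" using kp(3) by (metis less_one not_less power_0 one_le_power le_add2 add.commute power_eq_0_iff zero_less_Suc one_le_numeral)
    then have "(2::nat) ^ 1 \<le> 2 ^ p" by (intro power_increasing) auto
    then show "2 \<le> (2::nat) ^ p" by simp
  qed
  also have "\<dots> = 2 ^ (r + p)" by (simp add: power_add)
  finally have "real (card (nbhd E ` V)) \<le> real ((2::nat) ^ (r + p))" by (simp only: of_nat_le_iff)
  also have "\<dots> = 2 powr real (r + p)" by (subst powr_realpow) auto
  also have "\<dots> \<le> 2 powr (128 * (1/\<epsilon> + real r) * ln (1/\<epsilon>))"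
    using kp(4) by (intro powr_mono) auto
  finally show ?thesis .
qed


lemma reduction:
  fixes V :: "nat set" and \<epsilon> :: real
  assumes g: "graph V E" and kf: "Kr_free V E r" and r: "r \<ge> 3" and c: "cond V E r \<epsilon>"
    and e: "0 < \<epsilon>"
  shows "\<exists>(W::nat set) (EF::nat \<Rightarrow> nat \<Rightarrow> bool).
     maximal_Kr_free W EF r \<and> blowup_of V E W EF \<and> card W \<le> card (nbhd E ` V)"
proof -
  define \<phi> where "\<phi> u = (LEAST v. v \<in> V \<and> nbhd E v = nbhd E u)" for u
  have fV: "finite V" using g graph_fin by auto
  have phi1: "\<phi> u \<in> V \<and> nbhd E (\<phi> u) = nbhd E u" if "u \<in> V" for u
    unfolding \<phi>_def by (rule LeastI[of _ u]) (use that in auto)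
  have phi3: "\<phi> u = \<phi> v" if "nbhd E u = nbhd E v" for u v
    unfolding \<phi>_def using that by simp
  have phi2: "\<phi> (\<phi> u) = \<phi> u" if "u \<in> V" for u
    using phi3 phi1[OF that] by blast
  define W where "W = \<phi> ` V"
  define EF where "EF a b = (E a b \<and> a \<in> W \<and> b \<in> W)" for a b
  have WV: "W \<subseteq> V" using phi1 W_def by auto
  have fW: "finite W" using fV W_def by simp
  have Wfix: "\<phi> x = x" if "x \<in> W" for x using that phi2 W_def by auto
  have Eiff: "E u v \<longleftrightarrow> E (\<phi> u) (\<phi> v)" if "u \<in> V" "v \<in> V" for u v
  proof -
    have "E u v \<longleftrightarrow> v \<in> nbhd E u" by simp
    also have "\<dots> \<longleftrightarrow> v \<in> nbhd E (\<phi> u)" using phi1[OF that(1)] by simp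
    also have "\<dots> \<longleftrightarrow> E v (\<phi> u)" using graph_sym[OF g] by auto
    also have "\<dots> \<longleftrightarrow> \<phi> u \<in> nbhd E (\<phi> v)" using phi1[OF that(2)] by simp
    also have "\<dots> \<longleftrightarrow> E (\<phi> u) (\<phi> v)" using graph_sym[OF g] by auto
    finally show ?thesis .
  qed
  have blow: "blowup_of V E W EF"
    unfolding blowup_of_def
  proof (intro exI[of _ \<phi>] conjI ballI)
    show "\<phi> ` V = W" using W_def by simp
    fix u v assume "u \<in> V" "v \<in> V"
    then show "E u v \<longleftrightarrow> EF (\<phi> u) (\<phi> v)" using Eiff EF_def W_def by auto
  qed
  have gW: "graph W EF"
    unfolding graph_def EF_def using fW graph_sym[OF g] graph_irrefl[OF g] by blast
  have kfW: "Kr_free W EF r"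
    unfolding Kr_free_def
  proof
    assume "\<exists>S. clique W EF S \<and> finite S \<and> card S = r"
    then obtain S where S: "clique W EF S" "finite S" "card S = r" by blast
    have "clique V E S" using S(1) WV unfolding clique_def EF_def by auto
    then show False using kf S unfolding Kr_free_def by blast
  qed
  have maxW: "\<not> Kr_free W (add_edge EF x y) r"
    if x: "x \<in> W" and y: "y \<in> W" and xy: "x \<noteq> y" and nxy: "\<not> EF x y" for x y
  proof -
    have xV: "x \<in> V" and yV: "y \<in> V" using x y WV by auto
    have "\<not> E x y" using nxy x y EF_def by simp
    have n0: "card V > 0" using xV fV card_gt_0_iff by blast
    have "real (num_cliques V E (nbhd E x \<inter> nbhd E y) (r - 2)) \<ge> \<epsilon> * real (card V) ^ (r - 2)"
      using c xV yV xy \<open>\<not> E x y\<close> unfolding cond_def by blast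
    moreover have "\<epsilon> * real (card V) ^ (r - 2) > 0" using e n0 by simp
    ultimately obtain Q where Q: "Q \<subseteq> nbhd E x \<inter> nbhd E y" "clique V E Q" "finite Q" "card Q = r - 2"
      using num_cliques_pos[OF g] by (meson less_le_trans)
    have QV: "Q \<subseteq> V" using Q(2) unfolding clique_def by auto
    have Eq: "E q q'" if "q \<in> Q" "q' \<in> Q" "q \<noteq> q'" for q q'
      using Q(2) that unfolding clique_def by auto
    have injQ: "inj_on \<phi> Q"
    proof (rule inj_onI, rule ccontr)
      fix q q' assume "q \<in> Q" "q' \<in> Q" "\<phi> q = \<phi> q'" "q \<noteq> q'"
      then have "E (\<phi> q) (\<phi> q')" using Eq Eiff QV by blast
      then show False using \<open>\<phi> q = \<phi> q'\<close> graph_irrefl[OF g] by metis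
    qed
    define R where "R = \<phi> ` Q"
    have RW: "R \<subseteq> W" using R_def QV W_def by auto
    have xR: "E x z \<and> E y z" if zR: "z \<in> R" for z
    proof -
      obtain q where q: "q \<in> Q" "z = \<phi> q" using zR R_def by auto
      have "E x q" "E y q" using Q(1) q by auto
      then have "E (\<phi> x) (\<phi> q)" "E (\<phi> y) (\<phi> q)" using Eiff xV yV QV q by auto
      then show "E x z \<and> E y z" using Wfix x y q by auto
    qed
    have RR: "E z z'" if zz: "z \<in> R" "z' \<in> R" "z \<noteq> z'" for z z'
    proof -
      obtain q q' where qq: "q \<in> Q" "z = \<phi> q" "q' \<in> Q" "z' = \<phi> q'" using zz R_def by auto
      then have "q \<noteq> q'" using zz(3) by auto
      then have "E q q'" using Eq qq by auto
      then show ?thesis using Eiff QV qq by auto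
    qed
    define S where "S = insert x (insert y R)"
    have "clique W (add_edge EF x y) S"
      unfolding clique_def
    proof (intro conjI ballI impI)
      show "S \<subseteq> W" using S_def RW x y by auto
    next
      fix a b assume a: "a \<in> S" and b: "b \<in> S" and ab: "a \<noteq> b"
      have aW: "a \<in> W" and bW: "b \<in> W" using a b S_def RW x y by auto
      show "add_edge EF x y a b"
        unfolding add_edge_def EF_def
        using a b ab aW bW xR RR graph_sym[OF g] unfolding S_def by blast
    qed
    moreover have "card S = r"
    proof -
      have "x \<notin> R" "y \<notin> R" using xR graph_irrefl[OF g] by blast+
      moreover have "card R = r - 2" using injQ Q(4) R_def by (simp add: card_image)
      moreover have "finite R" using Q(3) R_def by simp
      ultimately show ?thesis using xy r S_def by simp
    qed
    moreover have "finite S" using S_def Q(3) R_def by simp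
    ultimately show ?thesis unfolding Kr_free_def by blast
  qed
  have "maximal_Kr_free W EF r"
    unfolding maximal_Kr_free_def using gW kfW maxW by blast
  moreover have "card W \<le> card (nbhd E ` V)"
  proof -
    have "inj_on (nbhd E) W"
    proof (rule inj_onI)
      fix a b assume "a \<in> W" "b \<in> W" "nbhd E a = nbhd E b"
      then show "a = b" using phi3 Wfix by metis
    qed
    then have "card W = card (nbhd E ` W)" by (simp add: card_image)
    also have "\<dots> \<le> card (nbhd E ` V)" using WV fV by (intro card_mono) auto
    finally show ?thesis .
  qed
  ultimately show ?thesis using blow by blast
qed

theorem theorem1p6:
  shows "\<exists>C::real. C > 0 \<and>
    (\<forall>(r::nat) (\<epsilon>::real) (V::nat set) (E::nat \<Rightarrow> nat \<Rightarrow> bool).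
      r \<ge> 3 \<and> 0 < \<epsilon> \<and> \<epsilon> \<le> 1/2 \<and> graph V E \<and> Kr_free V E r \<and>
      (\<forall>u\<in>V. \<forall>v\<in>V. u \<noteq> v \<and> \<not> E u v \<longrightarrow>
         real (num_cliques V E (nbhd E u \<inter> nbhd E v) (r - 2)) \<ge> \<epsilon> * real (card V) ^ (r - 2))
      \<longrightarrow> (\<exists>(W::nat set) (EF::nat \<Rightarrow> nat \<Rightarrow> bool).
             maximal_Kr_free W EF r \<and> blowup_of V E W EF \<and>
             real (card W) \<le> 2 powr (C * (1/\<epsilon> + real r) * ln (1/\<epsilon>))))"
proof (intro exI[of _ 128] conjI allI impI)
  show "(128::real) > 0" by simp
next
  fix r :: nat and \<epsilon> :: real and V :: "nat set" and E :: "nat \<Rightarrow> nat \<Rightarrow> bool"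
  assume H: "r \<ge> 3 \<and> 0 < \<epsilon> \<and> \<epsilon> \<le> 1/2 \<and> graph V E \<and> Kr_free V E r \<and>
      (\<forall>u\<in>V. \<forall>v\<in>V. u \<noteq> v \<and> \<not> E u v \<longrightarrow>
         real (num_cliques V E (nbhd E u \<inter> nbhd E v) (r - 2)) \<ge> \<epsilon> * real (card V) ^ (r - 2))"
  then have g: "graph V E" and kf: "Kr_free V E r" and r: "r \<ge> 3" and c: "cond V E r \<epsilon>"
    and e: "0 < \<epsilon>" "\<epsilon> \<le> 1/2" unfolding cond_def by auto
  obtain W :: "nat set" and EF :: "nat \<Rightarrow> nat \<Rightarrow> bool" where W: "maximal_Kr_free W EF r" "blowup_of V E W EF" "card W \<le> card (nbhd E ` V)"
    using reduction[OF g kf r c e(1)] by blast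
  have "real (card W) \<le> real (card (nbhd E ` V))" using W(3) by simp
  also have "\<dots> \<le> 2 powr (128 * (1/\<epsilon> + real r) * ln (1/\<epsilon>))"
    by (rule main_bound[OF g kf r c e])
  finally show "\<exists>(W::nat set) (EF::nat \<Rightarrow> nat \<Rightarrow> bool).
             maximal_Kr_free W EF r \<and> blowup_of V E W EF \<and>
             real (card W) \<le> 2 powr (128 * (1/\<epsilon> + real r) * ln (1/\<epsilon>))" using W by blast
qed

end
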